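(* Let $\pi:\mathbf H_o\to\mathbf{WQSym}$ be the projection $\mathcal F\mapsto\pi(S'^{\mathcal F})$ induced by $a_{ij}\mapsto x_j$ on the second realization, and $\iota:\mathbf H_{NCK}\to\mathbf H_o$ the embedding by canonical (preorder) labelling. Then $\pi\circ\iota$ is injective; i.e., the elements $\pi(S'^{\iota(\overline{\mathcal F})})=\sum_u\mathbf M_u$ (sum over packed words $u$ with $u_k<u_l$ whenever $k$ is the parent of $l$ in $\iota(\overline{\mathcal F})$), for $\overline{\mathcal F}$ ranging over plane forests, are linearly independent in $\mathbf{WQSym}$.
   Context: A plane forest is a finite sequence of plane trees (rooted trees whose children are linearly ordered); $\mathbf H_{NCK}$ is the vector space (noncommutative Connes–Kreimer Hopf algebra) with basis the plane forests. For a plane forest $\overline{\mathcal F}$ with $n$ vertices, $\iota(\overline{\mathcal F})$ is the rooted forest on vertex set $[n]$ obtained by numbering the vertices in order of first visit in a left depth-first traversal of the trees from left to right. $\mathbf H_o$ is the Hopf algebra with basis ordered forests (rooted forests on vertex set $[n]$, labels arbitrary). Second realization: over $A'=\{a_{ij}:1\le i\le j\}$ with $a_{hi}\prec a_{ij}$ for $h\le i<j$, $S'^{\mathcal F}$ is the sum of words $w_1\cdots w_n$ with $w_k$ a diagonal letter $a_{ii}$ for each root $k$ and $w_k\prec w_l$ whenever $k$ is the parent of $l$. $\pi$ is the algebra morphism $a_{ij}\mapsto x_j$ into series over $X=\{x_1<x_2<\cdots\}$. A word over positive integers is packed if its set of letters is $\{1,\dots,m\}$; $\mathrm{pack}(w)$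 replaces the $r$-th smallest letter by $r$; $\mathbf M_u=\sum_{\mathrm{pack}(w)=u}w$, and $\mathbf{WQSym}$ is the span of the $\mathbf M_u$. *)

theory Defs
  imports Main
begin

datatype ptree = PNode "ptree list"

type_synonym pforest = "ptree list"

fun psize :: "ptree \<Rightarrow> nat" where
  "psize (PNode cs) = Suc (sum_list (map psize cs))"

definition fsize :: "pforest \<Rightarrow> nat" where
  "fsize ts = sum_list (map psize ts)"

text \<open>Parent-child edges of the canonical labelling iota: vertices are numbered
  in order of first visit of a left depth-first traversal, trees from left to
  right, starting with label off. A pair (k,l) means k is the parent of l.\<close>
fun fedges :: "nat \<Rightarrow> pforest \<Rightarrow> (nat \<times> nat) set" where
  "fedges off [] = {}"
| "fedges off (PNode cs # ts) =
     {(off, off + 1 + fsize (take i cs)) | i. i < length cs}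
     \<union> fedges (Suc off) cs \<union> fedges (off + 1 + fsize cs) ts"

text \<open>iota(F): the ordered forest on vertex set {1..n}, given by its parent relation.\<close>
definition iota_edges :: "pforest \<Rightarrow> (nat \<times> nat) set" where
  "iota_edges F = fedges 1 F"

text \<open>Words over the positive integers are lists of nat all of whose letters are positive;
  series over X are functions from such words to coefficients.\<close>

definition packed :: "nat list \<Rightarrow> bool" where
  "packed u \<longleftrightarrow> (\<exists>m. set u = {1..m})"

definition pack :: "nat list \<Rightarrow> nat list" where
  "pack w = map (\<lambda>x. card {y \<in> set w. y \<le> x}) w"

text \<open>The series M_u = sum of all words w (over positive integers) with pack w = u.\<close>
definition Mser :: "nat list \<Rightarrow> nat list \<Rightarrow> 'k::zero_neq_one" where
  "Mser u w = (if 0 \<notin> set w \<and> pack w = u then 1 else 0)"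

text \<open>Packed words u with u_k < u_l whenever k is the parent of l in iota(F)
  (vertex k corresponds to position k, i.e. list index k-1).\<close>
definition PW :: "pforest \<Rightarrow> nat list set" where
  "PW F = {u. length u = fsize F \<and> packed u \<and>
              (\<forall>(k,l) \<in> iota_edges F. u ! (k - 1) < u ! (l - 1))}"

text \<open>pi(S'^{iota F}) = sum over u in PW F of M_u, as a series (coefficient of word w).\<close>
definition piota :: "pforest \<Rightarrow> nat list \<Rightarrow> 'k::comm_ring_1" where
  "piota F w = (\<Sum>u\<in>PW F. Mser u w)"

end

theory Submission
  imports Defs
begin

fun dl :: "nat \<Rightarrow> pforest \<Rightarrow> nat list" where
  "dl d [] = []"
| "dl d (PNode cs # ts) = d # dl (Suc d) cs @ dl d ts"

lemma fsize_Nil[simp]: "fsize [] = 0" by (simp add: fsize_def)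
lemma fsize_Cons[simp]: "fsize (t # ts) = psize t + fsize ts" by (simp add: fsize_def)
lemma psize_PNode[simp]: "psize (PNode cs) = Suc (fsize cs)" by (simp add: fsize_def)
declare psize.simps[simp del]
lemma pf_cases: "G = [] \<or> (\<exists>cs ts. G = PNode cs # ts)" by (metis list.exhaust ptree.exhaust)
lemma fsize_append[simp]: "fsize (xs @ ys) = fsize xs + fsize ys" by (simp add: fsize_def)
lemma psize_pos: "psize t > 0" by (cases t) (auto simp: psize.simps)

lemma len_dl[simp]: "length (dl d F) = fsize F"
  by (induction d F rule: dl.induct) (auto simp: psize_PNode)

lemma dl_ge: "x \<in> set (dl d F) \<Longrightarrow> d \<le> x"
  by (induction d F arbitrary: x rule: dl.induct) fastforce+

lemma dl_hd: "dl d F = [] \<or> hd (dl d F) = d"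
  using pf_cases[of F] by auto

lemma app_split:
  fixes d :: nat
  assumes "\<forall>x\<in>set xs. d < x" "\<forall>x\<in>set xs'. d < x"
    "ys = [] \<or> hd ys = d" "ys' = [] \<or> hd ys' = d" "xs @ ys = xs' @ ys'"
  shows "xs = xs' \<and> ys = ys'"
  using assms
proof (induction xs arbitrary: xs')
  case Nil
  show ?case
  proof (cases xs')
    case (Cons b zs)
    then have "ys = b # zs @ ys'" using Nil by simp
    then show ?thesis using Nil Cons by auto
  qed (use Nil in auto)
next
  case (Cons a xs)
  then show ?case by (cases xs') force+
qed

lemma dl_inj: "dl d F = dl d G \<Longrightarrow> F = G"
proof (induction d F arbitrary: G rule: dl.induct)
  case (1 d)
  then show ?case using pf_cases[of G] by auto
next
  case (2 d cs ts)
  then obtain cs' ts' where G: "G = PNode cs' # ts'"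
    using pf_cases[of G] by auto
  have e: "dl (Suc d) cs @ dl d ts = dl (Suc d) cs' @ dl d ts'" using 2(3) G by simp
  have "dl (Suc d) cs = dl (Suc d) cs' \<and> dl d ts = dl d ts'"
    apply (rule app_split[OF _ _ dl_hd dl_hd e])
    using dl_ge[of _ "Suc d"] by (auto simp: Suc_le_eq)
  then show ?case using 2(1,2) G by auto
qed

lemma fsize_take_less: "i < length cs \<Longrightarrow> fsize (take i cs) < fsize cs"
proof -
  assume i: "i < length cs"
  have "fsize cs = fsize (take i cs) + fsize (drop i cs)"
    by (metis append_take_drop_id fsize_append)
  moreover have "drop i cs = cs ! i # drop (Suc i) cs" using i by (simp add: Cons_nth_drop_Suc)
  ultimately show ?thesis using psize_pos[of "cs ! i"] by simp
qed

lemma dl_root: "i < length cs \<Longrightarrow> dl d cs ! fsize (take i cs) = d"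
proof (induction cs arbitrary: i)
  case Nil then show ?case by simp
next
  case (Cons t cs)
  obtain ch where t: "t = PNode ch" by (cases t)
  show ?case
  proof (cases i)
    case 0 then show ?thesis using t by simp
  next
    case (Suc j)
    then show ?thesis using Cons t by (simp add: nth_append psize_PNode)
  qed
qed

lemma fedges_range: "(k,l) \<in> fedges off F \<Longrightarrow> off \<le> k \<and> k < l \<and> l < off + fsize F"
proof (induction off F rule: fedges.induct)
  case (1 off) then show ?case by simp
next
  case (2 off cs ts)
  then show ?case using fsize_take_less[of _ cs] by (auto simp: psize_PNode) (meson add_lessD1 fsize_take_less less_imp_le_nat trans_less_add1)
qed


lemma dl_edge: "(k,l) \<in> fedges off F \<Longrightarrow> dl d F ! (l - off) = Suc (dl d F ! (k - off))"
proof (induction off F arbitrary: d rule: fedges.induct)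
  case (1 off) then show ?case by simp
next
  case (2 off cs ts)
  from 2(3) consider (a) i where "k = off" "l = off + 1 + fsize (take i cs)" "i < length cs"
    | (b) "(k,l) \<in> fedges (Suc off) cs" | (c) "(k,l) \<in> fedges (off + 1 + fsize cs) ts"
    by auto
  then show ?case
  proof cases
    case a
    then show ?thesis using fsize_take_less[OF a(3)] dl_root[OF a(3), of "Suc d"]
      by (simp add: nth_append)
  next
    case b
    have r: "Suc off \<le> k" "k < l" "l < Suc off + fsize cs" using fedges_range[OF b] by auto
    have "l - off = Suc (l - Suc off)" "k - off = Suc (k - Suc off)"
      "k - Suc off < fsize cs" "l - Suc off < fsize cs" using r by auto
    then show ?thesis using 2(1)[OF b, of "Suc d"] r by (simp add: nth_append)
  next
    case c
    have r: "off + 1 + fsize cs \<le> k" "k < l" using fedges_range[OF c] by auto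
    have "l - off = Suc (l - Suc off)" "k - off = Suc (k - Suc off)"
      "\<not> k - Suc off < fsize cs" "\<not> l - Suc off < fsize cs"
      "k - Suc off - fsize cs = k - Suc (off + fsize cs)"
      "l - Suc off - fsize cs = l - Suc (off + fsize cs)" using r by auto
    then show ?thesis using 2(2)[OF c, of d] r by (simp add: nth_append)
  qed
qed

lemma dl_set: "set (dl d F) = {} \<or> (\<exists>m. set (dl d F) = {d..m})"
proof (induction d F rule: dl.induct)
  case (1 d) then show ?case by simp
next
  case (2 d cs ts)
  obtain m1 where m1: "set (dl (Suc d) cs) = {Suc d..m1}"
    using 2(1) by (metis atLeastatMost_empty lessI)
  obtain m2 where m2: "set (dl d ts) = {d..m2} \<or> set (dl d ts) = {}"
    using 2(2) by blast
  show ?case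
    using m2 proof
    assume "set (dl d ts) = {d..m2}"
    then have "set (dl d (PNode cs # ts)) = {d..max d (max m1 m2)}" using m1 by auto
    then show ?thesis by blast
  next
    assume "set (dl d ts) = {}"
    then have "set (dl d (PNode cs # ts)) = {d..max d m1}" using m1 by auto
    then show ?thesis by blast
  qed
qed

lemma dl_packed: "packed (dl (Suc 0) F)"
proof -
  have "{Suc 0..0} = {}" by simp
  then show ?thesis using dl_set[of "Suc 0" F] unfolding packed_def by (metis One_nat_def)
qed

lemma dl_le:
  "(\<forall>(k,l)\<in>fedges off G. f k < (f l::nat)) \<Longrightarrow> (\<forall>i<length G. d \<le> f (off + fsize (take i G)))
   \<Longrightarrow> i < fsize G \<Longrightarrow> dl d G ! i \<le> f (off + i)"
proof (induction off G arbitrary: d i rule: fedges.induct)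
  case (1 off) then show ?case by simp
next
  case (2 off cs ts)
  have e1: "\<forall>(k,l)\<in>fedges (Suc off) cs. f k < f l" using 2(3) by auto
  have e2: "\<forall>(k,l)\<in>fedges (off + 1 + fsize cs) ts. f k < f l" using 2(3) by auto
  have r0: "d \<le> f off" using 2(4) by force
  have rc: "\<forall>j<length cs. Suc d \<le> f (Suc off + fsize (take j cs))"
  proof (intro allI impI)
    fix j assume "j < length cs"
    then have "(off, off + 1 + fsize (take j cs)) \<in> fedges off (PNode cs # ts)" by auto
    then show "Suc d \<le> f (Suc off + fsize (take j cs))" using 2(3) r0 by fastforce
  qed
  have rt: "\<forall>j<length ts. d \<le> f (off + 1 + fsize cs + fsize (take j ts))"
  proof (intro allI impI)
    fix j assume "j < length ts"
    then have "d \<le> f (off + fsize (take (Suc j) (PNode cs # ts)))" using 2(4)[rule_format, of "Suc j"] by simp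
    then show "d \<le> f (off + 1 + fsize cs + fsize (take j ts))" by (simp add: add.assoc)
  qed
  show ?case
  proof (cases i)
    case 0 then show ?thesis using r0 by simp
  next
    case (Suc j)
    show ?thesis
    proof (cases "j < fsize cs")
      case True
      then show ?thesis using 2(1)[OF e1 rc True] Suc by (simp add: nth_append)
    next
      case False
      have "j - fsize cs < fsize ts" using 2(5) Suc False by simp
      from 2(2)[OF e2 rt this] show ?thesis using Suc False by (simp add: nth_append)
    qed
  qed
qed

lemma sum_le:
  "length xs = length ys \<Longrightarrow> \<forall>i<length xs. xs ! i \<le> ys ! i
   \<Longrightarrow> sum_list xs \<le> (sum_list ys :: nat)"
proof (induction xs ys rule: list_induct2)
  case Nil then show ?case by simp
next
  case (Cons x xs y ys)
  have h: "x \<le> y" using Cons(3) by force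
  have a: "\<forall>i<length xs. xs ! i \<le> ys ! i" using Cons(3) by force
  show ?case using Cons(2)[OF a] h by simp
qed

lemma sum_less:
  "length xs = length ys \<Longrightarrow> \<forall>i<length xs. xs ! i \<le> ys ! i \<Longrightarrow> xs \<noteq> ys
   \<Longrightarrow> sum_list xs < (sum_list ys :: nat)"
proof (induction xs ys rule: list_induct2)
  case Nil then show ?case by simp
next
  case (Cons x xs y ys)
  have h: "x \<le> y" using Cons(3) by force
  have a: "\<forall>i<length xs. xs ! i \<le> ys ! i" using Cons(3) by force
  have "sum_list xs \<le> sum_list ys"
    using a Cons(1) sum_le by blast
  then show ?case using Cons a h
    by (cases "xs = ys") auto
qed

lemma pack_id: "packed w \<Longrightarrow> pack w = w"
proof -
  assume "packed w"
  then obtain m where m: "set w = {1..m}" unfolding packed_def by auto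
  have "card {y \<in> set w. y \<le> x} = x" if "x \<in> set w" for x
  proof -
    have "{y \<in> set w. y \<le> x} = {1..x}" using m that by auto
    then show ?thesis by simp
  qed
  then show ?thesis unfolding pack_def by (simp add: map_idI)
qed

lemma PW_finite: "finite (PW F)"
proof -
  have "PW F \<subseteq> {u. set u \<subseteq> {0..fsize F} \<and> length u = fsize F}"
  proof
    fix u assume "u \<in> PW F"
    then have u: "length u = fsize F" "packed u" unfolding PW_def by auto
    then obtain m where m: "set u = {1..m}" unfolding packed_def by auto
    have "m = card (set u)" using m by simp
    also have "\<dots> \<le> length u" by (rule card_length)
    finally show "u \<in> {u. set u \<subseteq> {0..fsize F} \<and> length u = fsize F}" using u m by auto
  qed
  moreover have "finite {u. set u \<subseteq> {0..fsize F} \<and> length u = fsize F}"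
    by (rule finite_lists_length_eq) simp
  ultimately show ?thesis by (rule finite_subset)
qed


lemma piota_eval:
  assumes "packed w" "0 \<notin> set w"
  shows "piota G w = (if w \<in> PW G then 1 else 0)"
proof -
  have "piota G w = (\<Sum>u\<in>PW G. if u = w then 1 else 0)"
    unfolding piota_def Mser_def using assms pack_id by (intro sum.cong) auto
  also have "\<dots> = (if w \<in> PW G then 1 else 0)"
    using PW_finite[of G] by (simp add: sum.delta)
  finally show ?thesis .
qed

theorem mainTheorem6:
  fixes S :: "pforest set" and c :: "pforest \<Rightarrow> 'k::field"
  assumes "finite S"
    and "\<And>w. (\<Sum>F\<in>S. c F * piota F w) = 0"
  shows "\<forall>F\<in>S. c F = 0"
proof (rule ccontr)
  assume "\<not> (\<forall>F\<in>S. c F = 0)"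
  then obtain F0 where "F0 \<in> S" "c F0 \<noteq> 0" by auto
  then obtain F where F: "F \<in> S" "c F \<noteq> 0"
    and Fmin: "\<And>G. G \<in> S \<Longrightarrow> c G \<noteq> 0 \<Longrightarrow> sum_list (dl 1 F) \<le> sum_list (dl 1 G)"
    using ex_has_least_nat[of "\<lambda>G. G \<in> S \<and> c G \<noteq> 0" F0 "\<lambda>G. sum_list (dl 1 G)"] by blast
  define w where "w = dl 1 F"
  have pw: "packed w" unfolding w_def using dl_packed by simp
  have ge1: "\<And>x. x \<in> set w \<Longrightarrow> 1 \<le> x" unfolding w_def using dl_ge by blast
  have w0: "0 \<notin> set w" using ge1 by fastforce
  have wF: "w \<in> PW F"
    unfolding PW_def iota_edges_def w_def using pw dl_edge[of _ _ 1 F 1] unfolding w_def by auto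
  have other: "w \<notin> PW G" if G: "G \<in> S" "c G \<noteq> 0" "G \<noteq> F" for G
  proof
    assume wG: "w \<in> PW G"
    have len: "length w = fsize G" using wG unfolding PW_def by auto
    have ed: "\<forall>(k,l)\<in>fedges 1 G. (\<lambda>k. w ! (k - 1)) k < (\<lambda>k. w ! (k - 1)) l"
      using wG unfolding PW_def iota_edges_def by auto
    have rt: "\<forall>i<length G. 1 \<le> (\<lambda>k. w ! (k - 1)) (1 + fsize (take i G))"
    proof (intro allI impI)
      fix i assume "i < length G"
      then have "fsize (take i G) < length w" using len fsize_take_less by simp
      then show "1 \<le> (\<lambda>k. w ! (k - 1)) (1 + fsize (take i G))" using ge1 by simp
    qed
    have le: "\<forall>i<length (dl 1 G). dl 1 G ! i \<le> w ! i"
      using dl_le[OF ed rt] by simp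
    have ne: "dl 1 G \<noteq> w" unfolding w_def using dl_inj G(3) by metis
    have "sum_list (dl 1 G) < sum_list w" using sum_less[OF _ le ne] len by simp
    then show False using Fmin[OF G(1,2)] unfolding w_def by simp
  qed
  have "(\<Sum>G\<in>S. c G * piota G w) = c F * piota F w + (\<Sum>G\<in>S - {F}. c G * piota G w)"
    using assms(1) F(1) by (simp add: sum.remove)
  also have "(\<Sum>G\<in>S - {F}. c G * piota G w) = 0"
    using other by (intro sum.neutral) (auto simp: piota_eval[OF pw w0])
  also have "piota F w = 1" using wF by (simp add: piota_eval[OF pw w0])
  finally have "c F = 0" using assms(2)[of w] by simp
  then show False using F(2) by simp
qed

end
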